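(* Let $X$ be an arbitrary set, let $k: X\times X\to [0,+\infty]$ be a symmetric function, and let $\emptyset\neq H\subset L\subset X$. Then the rendezvous set $R(H,L)$ is nonempty.
   Context: For $H,L\subset X$ and $n\in\mathbb{N}$, the $n$-th rendezvous set of $L$ with respect to $H$ is $R_n(H,L):=\bigcap_{w_1,\dots,w_n\in H}\overline{\mathrm{conv}}\{\frac1n\sum_{j=1}^n k(x,w_j): x\in L\}$, where $\overline{\mathrm{conv}}$ denotes the closed convex hull in $\mathbb{R}\cup\{+\infty\}$ (a closed interval), and $R(H,L):=\bigcap_{n=1}^\infty R_n(H,L)$. Equivalently, $R(H,L)=[M(H,L),\overline{M}(H,L)]$ (with $[a,b]=\emptyset$ if $a>b$), where $M(H,L)=\lim_n M_n(H,L)$, $\overline{M}(H,L)=\lim_n\overline{M}_n(H,L)$, $M_n(H,L)=\sup_{w_1,\dots,w_n\in H}\inf_{x\in L}\frac1n\sum_{j=1}^n k(x,w_j)$ and $\overline{M}_n(H,L)=\inf_{w_1,\dots,w_n\in H}\sup_{x\in L}\frac1n\sum_{j=1}^n k(x,w_j)$. *)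

theory Defs
  imports "HOL-Analysis.Analysis"
begin

text \<open>The closed convex hull of a set S of values in [0,+\<infinity>] is the closed
  interval [Inf S, Sup S] (closure taken in the extended topology).\<close>

definition cl_conv_hull :: "ennreal set \<Rightarrow> ennreal set" where
  "cl_conv_hull S = {t. Inf S \<le> t \<and> t \<le> Sup S}"

definition rendezvous_n ::
  "('a \<Rightarrow> 'a \<Rightarrow> ennreal) \<Rightarrow> nat \<Rightarrow> 'a set \<Rightarrow> 'a set \<Rightarrow> ennreal set" where
  "rendezvous_n k n H L =
     (\<Inter>w \<in> {w. \<forall>j<n. w j \<in> H}.
        cl_conv_hull ((\<lambda>x. (\<Sum>j<n. k x (w j)) / of_nat n) ` L))"

definition rendezvous ::
  "('a \<Rightarrow> 'a \<Rightarrow> ennreal) \<Rightarrow> 'a set \<Rightarrow> 'a set \<Rightarrow> ennreal set" where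
  "rendezvous k H L = (\<Inter>n \<in> {1..}. rendezvous_n k n H L)"

end

theory Submission
  imports Defs
begin

lemma inv_nat_cancel: "(n::nat) \<ge> 1 \<Longrightarrow> of_nat n * inverse (of_nat n :: ennreal) = 1"
  using ennreal_divide_self[of "of_nat n :: ennreal"]
  by (simp add: divide_ennreal_def of_nat_less_top)

lemma key:
  fixes k :: "'a \<Rightarrow> 'a \<Rightarrow> ennreal"
  assumes sym: "\<And>x y. k x y = k y x" and HL: "H \<subseteq> L"
    and n: "n \<ge> 1" and m: "m \<ge> 1"
    and w: "\<forall>j<n. w j \<in> H" and v: "\<forall>i<m. v i \<in> H"
  shows "Inf ((\<lambda>x. (\<Sum>j<n. k x (w j)) / of_nat n) ` L)
       \<le> Sup ((\<lambda>x. (\<Sum>i<m. k x (v i)) / of_nat m) ` L)"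
proof -
  define A where "A = Inf ((\<lambda>x. (\<Sum>j<n. k x (w j)) / of_nat n) ` L)"
  define B where "B = Sup ((\<lambda>x. (\<Sum>i<m. k x (v i)) / of_nat m) ` L)"
  define S where "S = (\<Sum>i<m. \<Sum>j<n. k (v i) (w j))"
  have "(\<Sum>i<m. A) \<le> (\<Sum>i<m. (\<Sum>j<n. k (v i) (w j)) / of_nat n)"
  proof (rule sum_mono)
    fix i assume "i \<in> {..<m}"
    then have "v i \<in> L" using v HL by auto
    then show "A \<le> (\<Sum>j<n. k (v i) (w j)) / of_nat n"
      unfolding A_def by (intro Inf_lower) auto
  qed
  also have "\<dots> = S * inverse (of_nat n)"
    unfolding S_def divide_ennreal_def by (simp add: sum_distrib_right)
  finally have 1: "of_nat m * A \<le> S * inverse (of_nat n)" by simp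
  have "S * inverse (of_nat m) = (\<Sum>j<n. (\<Sum>i<m. k (w j) (v i)) / of_nat m)"
    unfolding S_def divide_ennreal_def
    by (simp add: sum_distrib_right sum.swap[of _ "{..<m}"] sym)
  also have "\<dots> \<le> (\<Sum>j<n. B)"
  proof (rule sum_mono)
    fix j assume "j \<in> {..<n}"
    then have "w j \<in> L" using w HL by auto
    then show "(\<Sum>i<m. k (w j) (v i)) / of_nat m \<le> B"
      unfolding B_def by (intro Sup_upper) auto
  qed
  finally have 2: "S * inverse (of_nat m) \<le> of_nat n * B" by simp
  have "A = (of_nat m * A) * inverse (of_nat m)"
    using inv_nat_cancel[OF m] by (simp add: mult_ac)
  also have "\<dots> \<le> S * inverse (of_nat n) * inverse (of_nat m)"
    using 1 by (intro mult_right_mono) auto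
  also have "\<dots> = (S * inverse (of_nat m)) * inverse (of_nat n)"
    by (simp add: mult_ac)
  also have "\<dots> \<le> of_nat n * B * inverse (of_nat n)"
    using 2 by (intro mult_right_mono) auto
  also have "\<dots> = B"
    using inv_nat_cancel[OF n] by (simp add: mult_ac)
  finally show ?thesis unfolding A_def B_def .
qed

theorem proposition2p2:
  fixes k :: "'a \<Rightarrow> 'a \<Rightarrow> ennreal" and H L :: "'a set"
  assumes "\<And>x y. k x y = k y x"
    and "H \<noteq> {}" and "H \<subseteq> L"
  shows "rendezvous k H L \<noteq> {}"
proof -
  define P where "P = {(n, w). n \<ge> (1::nat) \<and> (\<forall>j<n. w j \<in> H)}"
  define t where "t = (SUP p\<in>P. Inf ((\<lambda>x. (\<Sum>j<fst p. k x (snd p j)) / of_nat (fst p)) ` L))"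
  have main: "Inf ((\<lambda>x. (\<Sum>j<n. k x (w j)) / of_nat n) ` L) \<le> t \<and>
       t \<le> Sup ((\<lambda>x. (\<Sum>j<n. k x (w j)) / of_nat n) ` L)"
    if n: "1 \<le> n" and w: "\<forall>j<n. w j \<in> H" for n w
  proof -
    have "(n, w) \<in> P" using n w unfolding P_def by auto
    then show "Inf ((\<lambda>x. (\<Sum>j<n. k x (w j)) / of_nat n) ` L) \<le> t \<and>
       t \<le> Sup ((\<lambda>x. (\<Sum>j<n. k x (w j)) / of_nat n) ` L)"
    proof (intro conjI)
      show "Inf ((\<lambda>x. (\<Sum>j<n. k x (w j)) / of_nat n) ` L) \<le> t"
        unfolding t_def by (rule SUP_upper2[OF \<open>(n, w) \<in> P\<close>]) simp
      show "t \<le> Sup ((\<lambda>x. (\<Sum>j<n. k x (w j)) / of_nat n) ` L)"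
        unfolding t_def
      proof (rule SUP_least)
        fix p assume "p \<in> P"
        then obtain m v where p: "p = (m, v)" "m \<ge> 1" "\<forall>j<m. v j \<in> H"
          unfolding P_def by auto
        show "Inf ((\<lambda>x. (\<Sum>j<fst p. k x (snd p j)) / of_nat (fst p)) ` L)
          \<le> Sup ((\<lambda>x. (\<Sum>j<n. k x (w j)) / of_nat n) ` L)"
          using key[OF assms(1) assms(3) p(2) n p(3) w] p(1) by simp
      qed
    qed
  qed
  have "t \<in> rendezvous k H L"
    unfolding rendezvous_def rendezvous_n_def cl_conv_hull_def
    using main by auto
  then show ?thesis by auto
qed

end
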